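(* For a nonnegative matrix $M\in\mathbb{R}_+^{p\times q}$ the following statements are pairwise equivalent: (i) $M$ is a slack matrix of a polyhedral cone; (ii) $M$ satisfies the RCGC, i.e., $\{x^TM : x\in\mathbb{R}_+^p\}=\{x^TM: x\in\mathbb{R}^p\}\cap\mathbb{R}_+^q$; (iii) $M$ satisfies the CCGC, i.e., $\{Mz: z\in\mathbb{R}_+^q\}=\{Mz: z\in\mathbb{R}^q\}\cap\mathbb{R}_+^p$.
   Context: A matrix $S\in\mathbb{R}^{p\times q}$ is a slack matrix of a polyhedral cone $K\subseteq\mathbb{R}^n$ if there are matrices $A\in\mathbb{R}^{p\times n}$ and $B\in\mathbb{R}^{n\times q}$ with $K=\{x\in\mathbb{R}^n: x^TB\ge 0\}=\{y^TA: y\in\mathbb{R}_+^p\}$ and $S=AB$. A matrix is a slack matrix of a polyhedral cone if it is a slack matrix of some polyhedral cone. *)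

theory Defs
  imports "Jordan_Normal_Form.Matrix"
begin

text \<open>Matrices and vectors of varying dimension are represented with the
  Jordan_Normal_Form types. A row vector x^T M is represented as the column vector
  (transpose M) *v x.\<close>

definition nonneg_vec :: "real vec \<Rightarrow> bool" where
  "nonneg_vec v \<longleftrightarrow> (\<forall>i < dim_vec v. v $ i \<ge> 0)"

definition nonneg_mat :: "real mat \<Rightarrow> bool" where
  "nonneg_mat M \<longleftrightarrow> (\<forall>i < dim_row M. \<forall>j < dim_col M. M $$ (i, j) \<ge> 0)"

definition is_slack_matrix_of_cone :: "real mat \<Rightarrow> real vec set \<Rightarrow> bool" where
  "is_slack_matrix_of_cone S K \<longleftrightarrow>
     (\<exists>n A B. A \<in> carrier_mat (dim_row S) n \<and> B \<in> carrier_mat n (dim_col S) \<and>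
        K = {x \<in> carrier_vec n. nonneg_vec (transpose_mat B *\<^sub>v x)} \<and>
        K = {transpose_mat A *\<^sub>v y | y. y \<in> carrier_vec (dim_row S) \<and> nonneg_vec y} \<and>
        S = A * B)"

definition is_slack_matrix_of_polyhedral_cone :: "real mat \<Rightarrow> bool" where
  "is_slack_matrix_of_polyhedral_cone S \<longleftrightarrow> (\<exists>K. is_slack_matrix_of_cone S K)"

definition RCGC :: "real mat \<Rightarrow> bool" where
  "RCGC M \<longleftrightarrow>
     {transpose_mat M *\<^sub>v x | x. x \<in> carrier_vec (dim_row M) \<and> nonneg_vec x} =
     {transpose_mat M *\<^sub>v x | x. x \<in> carrier_vec (dim_row M)} \<inter>
     {v \<in> carrier_vec (dim_col M). nonneg_vec v}"

definition CCGC :: "real mat \<Rightarrow> bool" where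
  "CCGC M \<longleftrightarrow>
     {M *\<^sub>v z | z. z \<in> carrier_vec (dim_col M) \<and> nonneg_vec z} =
     {M *\<^sub>v z | z. z \<in> carrier_vec (dim_col M)} \<inter>
     {v \<in> carrier_vec (dim_row M). nonneg_vec v}"

end

theory Submission
  imports Defs
begin

definition dp :: "nat \<Rightarrow> (nat \<Rightarrow> real) \<Rightarrow> (nat \<Rightarrow> real) \<Rightarrow> real" where
  "dp p y x = (\<Sum>k<p. y k * x k)"

lemma dp_lin2: "dp p y (\<lambda>k. a * f k - b * g k) = a * dp p y f - b * dp p y g"
  unfolding dp_def by (simp add: sum_subtractf sum_distrib_left algebra_simps)

lemma dp_lin1: "dp p (\<lambda>k. f k - b * g k) x = dp p f x - b * dp p g x"
  unfolding dp_def by (simp add: sum_subtractf sum_distrib_left algebra_simps)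

lemma farkas_fun:
  fixes p q :: nat
  shows "\<forall>v w. (\<exists>l. (\<forall>i<q. l i \<ge> 0) \<and> (\<forall>k<p. w k = (\<Sum>i<q. l i * v i k))) \<or>
         (\<exists>y. (\<forall>i<q. dp p y (v i) \<ge> 0) \<and> dp p y w < 0)"
proof (induction q)
  case 0
  show ?case
  proof (intro allI)
    fix v :: "nat \<Rightarrow> nat \<Rightarrow> real" and w :: "nat \<Rightarrow> real"
    show "(\<exists>l. (\<forall>i<0. l i \<ge> 0) \<and> (\<forall>k<p. w k = (\<Sum>i<0. l i * v i k))) \<or>
         (\<exists>y. (\<forall>i<0. dp p y (v i) \<ge> 0) \<and> dp p y w < 0)"
    proof (cases "\<forall>k<p. w k = 0")
      case True then show ?thesis by auto
    next
      case False
      then obtain k0 where k0: "k0 < p" "w k0 \<noteq> 0" by auto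
      have "0 < (\<Sum>k<p. w k * w k)"
        by (rule sum_pos2[of _ k0]) (use k0 in \<open>auto simp: zero_less_mult_iff linorder_neq_iff\<close>)
      then have "dp p (\<lambda>k. - w k) w < 0" unfolding dp_def by (simp add: sum_negf)
      then show ?thesis by blast
    qed
  qed
next
  case (Suc q)
  show ?case
  proof (intro allI)
    fix v :: "nat \<Rightarrow> nat \<Rightarrow> real" and w :: "nat \<Rightarrow> real"
    show "(\<exists>l. (\<forall>i<Suc q. l i \<ge> 0) \<and> (\<forall>k<p. w k = (\<Sum>i<Suc q. l i * v i k))) \<or>
         (\<exists>y. (\<forall>i<Suc q. dp p y (v i) \<ge> 0) \<and> dp p y w < 0)"
    proof (cases "\<exists>l. (\<forall>i<q. l i \<ge> 0) \<and> (\<forall>k<p. w k = (\<Sum>i<q. l i * v i k))")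
      case True
      then obtain l where l: "\<forall>i<q. l i \<ge> 0" "\<forall>k<p. w k = (\<Sum>i<q. l i * v i k)" by blast
      let ?l = "l(q := 0)"
      have "\<forall>i<Suc q. ?l i \<ge> 0" using l(1) by (auto simp: less_Suc_eq)
      moreover have "\<forall>k<p. w k = (\<Sum>i<Suc q. ?l i * v i k)"
        using l(2) by (auto intro!: sum.cong)
      ultimately show ?thesis by blast
    next
      case False
      with Suc obtain y where y: "\<forall>i<q. dp p y (v i) \<ge> 0" "dp p y w < 0" by blast
      show ?thesis
      proof (cases "dp p y (v q) \<ge> 0")
        case True
        with y have "\<forall>i<Suc q. dp p y (v i) \<ge> 0" by (auto simp: less_Suc_eq)
        with y show ?thesis by blast
      next
        case False
        define a where "a = dp p y (v q)"
        have a: "a < 0" using False a_def by simp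
        define u where "u = v q"
        define v' where "v' = (\<lambda>i k. dp p y (v i) * u k - a * v i k)"
        define w' where "w' = (\<lambda>k. dp p y w * u k - a * w k)"
        from Suc consider
          (A) l where "\<forall>i<q. l i \<ge> 0" "\<forall>k<p. w' k = (\<Sum>i<q. l i * v' i k)"
          | (B) y' where "\<forall>i<q. dp p y' (v' i) \<ge> 0" "dp p y' w' < 0" by blast
        then show ?thesis
        proof cases
          case A
          define c where "c = (dp p y w - (\<Sum>i<q. l i * dp p y (v i))) / a"
          have "(\<Sum>i<q. l i * dp p y (v i)) \<ge> 0"
            using A(1) y(1) by (intro sum_nonneg) auto
          then have c: "c \<ge> 0" unfolding c_def using a y(2)
            by (intro divide_nonpos_neg) auto
          let ?l = "l(q := c)"
          have "\<forall>i<Suc q. ?l i \<ge> 0" using A(1) c by (auto simp: less_Suc_eq)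
          moreover have "\<forall>k<p. w k = (\<Sum>i<Suc q. ?l i * v i k)"
          proof (intro allI impI)
            fix k assume k: "k < p"
            have e: "w' k = (\<Sum>i<q. l i * v' i k)" using A(2) k by blast
            have "(\<Sum>i<q. l i * v' i k) = (\<Sum>i<q. l i * dp p y (v i)) * u k - a * (\<Sum>i<q. l i * v i k)"
              unfolding v'_def by (simp add: sum_subtractf sum_distrib_left sum_distrib_right algebra_simps)
            with e have "a * w k = a * ((\<Sum>i<q. l i * v i k) + c * u k)"
              unfolding w'_def c_def using a by (simp add: field_simps)
            then have "w k = (\<Sum>i<q. l i * v i k) + c * u k" using a by simp
            also have "\<dots> = (\<Sum>i<Suc q. ?l i * v i k)"
              unfolding u_def by (auto intro!: sum.cong)
            finally show "w k = (\<Sum>i<Suc q. ?l i * v i k)" .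
          qed
          ultimately show ?thesis by blast
        next
          case B
          define y'' where "y'' = (\<lambda>k. y' k - (dp p y' u / a) * y k)"
          have d: "dp p y'' x = dp p y' x - (dp p y' u / a) * dp p y x" for x
            unfolding y''_def by (rule dp_lin1)
          have "\<forall>i<Suc q. dp p y'' (v i) \<ge> 0"
          proof (intro allI impI)
            fix i assume i: "i < Suc q"
            show "dp p y'' (v i) \<ge> 0"
            proof (cases "i = q")
              case True then show ?thesis using a unfolding d u_def a_def by simp
            next
              case False
              with i have "i < q" by simp
              with B(1) have "dp p y' (v' i) \<ge> 0" by blast
              then have "dp p y (v i) * dp p y' u - a * dp p y' (v i) \<ge> 0"
                unfolding v'_def dp_lin2 by simp
              then have "- (dp p y (v i) * dp p y' u - a * dp p y' (v i)) / a \<ge> 0"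
                using a by (simp add: divide_nonpos_neg)
              then show ?thesis unfolding d using a by (simp add: field_simps)
            qed
          qed
          moreover have "dp p y'' w < 0"
          proof -
            have "dp p y w * dp p y' u - a * dp p y' w < 0"
              using B(2) unfolding w'_def dp_lin2 by simp
            then have "- (dp p y w * dp p y' u - a * dp p y' w) / a < 0"
              using a by (simp add: divide_pos_neg)
            then show ?thesis unfolding d using a by (simp add: field_simps)
          qed
          ultimately show ?thesis by blast
        qed
      qed
    qed
  qed
qed


lemma rankfac:
  fixes p q :: nat and m :: "nat \<Rightarrow> nat \<Rightarrow> real"
  shows "k \<le> p \<Longrightarrow> \<exists>(n::nat) a b c. (\<forall>i<k. \<forall>j<q. m i j = (\<Sum>l<n. a i l * b l j)) \<and>
     (\<forall>l<n. \<forall>j<q. b l j = (\<Sum>i<p. c l i * m i j)) \<and>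
     (\<forall>x. (\<forall>j<q. (\<Sum>l<n. x l * b l j) = 0) \<longrightarrow> (\<forall>l<n. x l = 0))"
proof (induction k)
  case 0
  show ?case by (intro exI[where x="0::nat"]) simp
next
  case (Suc k)
  then have kp: "k < p" by simp
  from Suc.IH[OF Suc_leD[OF Suc.prems]] obtain n :: nat and a b c where
    ab: "\<forall>i<k. \<forall>j<q. m i j = (\<Sum>l<n. a i l * b l j)" and
    bc: "\<forall>l<n. \<forall>j<q. b l j = (\<Sum>i<p. c l i * m i j)" and
    inj: "\<forall>x. (\<forall>j<q. (\<Sum>l<n. x l * b l j) = 0) \<longrightarrow> (\<forall>l<n. x l = 0)" by blast
  show ?case
  proof (cases "\<exists>co. \<forall>j<q. m k j = (\<Sum>l<n. co l * b l j)")
    case True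
    then obtain co where co: "\<forall>j<q. m k j = (\<Sum>l<n. co l * b l j)" by blast
    have "\<forall>i<Suc k. \<forall>j<q. m i j = (\<Sum>l<n. (a(k := co)) i l * b l j)"
      using ab co by (auto simp: less_Suc_eq)
    with bc inj show ?thesis by blast
  next
    case False
    define a' where "a' = (\<lambda>i l. if i = k then (if l = n then 1 else 0) else (if l = n then 0 else a i l))"
    define b' where "b' = b(n := (\<lambda>j. m k j))"
    define c' where "c' = c(n := (\<lambda>i. if i = k then 1 else 0))"
    have 1: "\<forall>i<Suc k. \<forall>j<q. m i j = (\<Sum>l<Suc n. a' i l * b' l j)"
    proof (intro allI impI)
      fix i j assume i: "i < Suc k" and j: "j < q"
      show "m i j = (\<Sum>l<Suc n. a' i l * b' l j)"
      proof (cases "i = k")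
        case True then show ?thesis unfolding a'_def b'_def by simp
      next
        case False
        with i have "i < k" by simp
        with ab j have "m i j = (\<Sum>l<n. a i l * b l j)" by blast
        also have "\<dots> = (\<Sum>l<n. a' i l * b' l j)"
          unfolding a'_def b'_def using False by (intro sum.cong) auto
        finally show ?thesis unfolding a'_def using False by simp
      qed
    qed
    have 2: "\<forall>l<Suc n. \<forall>j<q. b' l j = (\<Sum>i<p. c' l i * m i j)"
    proof (intro allI impI)
      fix l j assume l: "l < Suc n" and j: "j < q"
      show "b' l j = (\<Sum>i<p. c' l i * m i j)"
      proof (cases "l = n")
        case True
        have "(\<Sum>i<p. (if i = k then 1 else 0) * m i j) = m k j"
          proof -
          have "(\<Sum>i<p. (if i = k then 1 else 0) * m i j) = (\<Sum>i<p. if i = k then m k j else 0)"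
            by (intro sum.cong) auto
          also have "\<dots> = m k j" using kp by simp
          finally show ?thesis .
        qed
        then show ?thesis unfolding b'_def c'_def using True by simp
      next
        case False
        with l have ln: "l < n" by simp
        have "b l j = (\<Sum>i<p. c l i * m i j)" using bc ln j by blast
        then show ?thesis using False unfolding b'_def c'_def by simp
      qed
    qed
    have 3: "\<forall>x. (\<forall>j<q. (\<Sum>l<Suc n. x l * b' l j) = 0) \<longrightarrow> (\<forall>l<Suc n. x l = 0)"
    proof (rule allI, rule impI)
      fix x assume h: "\<forall>j<q. (\<Sum>l<Suc n. x l * b' l j) = 0"
      have h': "(\<Sum>l<n. x l * b l j) + x n * m k j = 0" if "j < q" for j
      proof -
        have "(\<Sum>l<n. x l * b' l j) = (\<Sum>l<n. x l * b l j)"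
          unfolding b'_def by (intro sum.cong) auto
        moreover have "(\<Sum>l<Suc n. x l * b' l j) = (\<Sum>l<n. x l * b' l j) + x n * m k j"
          unfolding b'_def by simp
        moreover have "(\<Sum>l<Suc n. x l * b' l j) = 0" using h that by blast
        moreover have "b' n j = m k j" unfolding b'_def by simp
        ultimately show ?thesis by simp
      qed
      have xn: "x n = 0"
      proof (rule ccontr)
        assume nz: "x n \<noteq> 0"
        have "\<exists>co. \<forall>j<q. m k j = (\<Sum>l<n. co l * b l j)"
        proof (rule exI[where x="\<lambda>l. - x l / x n"], intro allI impI)
          fix j assume "j < q"
          from h'[OF this] have "x n * m k j = - (\<Sum>l<n. x l * b l j)"
            by linarith
          then have "(x n * m k j) / x n = - (\<Sum>l<n. x l * b l j) / x n" by simp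
          then have "m k j = - (\<Sum>l<n. x l * b l j) / x n"
            using nz by simp
          also have "\<dots> = (\<Sum>l<n. - (x l * b l j)) / x n"
            by (simp only: sum_negf)
          also have "\<dots> = (\<Sum>l<n. - (x l * b l j) / x n)"
            by (rule sum_divide_distrib)
          also have "\<dots> = (\<Sum>l<n. (- x l / x n) * b l j)"
            by (intro sum.cong) auto
          finally show "m k j = (\<Sum>l<n. (- x l / x n) * b l j)" .
        qed
        with False show False by contradiction
      qed
      have "\<forall>j<q. (\<Sum>l<n. x l * b l j) = 0"
      proof (intro allI impI)
        fix j assume "j < q"
        from h'[OF this] xn show "(\<Sum>l<n. x l * b l j) = 0" by simp
      qed
      with inj have "\<forall>l<n. x l = 0" by blast
      with xn show "\<forall>l<Suc n. x l = 0" by (auto simp: less_Suc_eq)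
    qed
    show ?thesis
      apply (rule exI[where x="Suc n"])
      apply (rule exI[where x=a'])
      apply (rule exI[where x=b'])
      apply (rule exI[where x=c'])
      using 1 2 3 by blast
  qed
qed


lemma mv_idx: "M \<in> carrier_mat p q \<Longrightarrow> z \<in> carrier_vec q \<Longrightarrow> k < p \<Longrightarrow>
  (M *\<^sub>v z) $ k = (\<Sum>j<q. M $$ (k,j) * z $ j)"
  by (auto simp: scalar_prod_def lessThan_atLeast0 intro!: sum.cong)

lemma mtv_idx: "M \<in> carrier_mat p q \<Longrightarrow> y \<in> carrier_vec p \<Longrightarrow> j < q \<Longrightarrow>
  (transpose_mat M *\<^sub>v y) $ j = (\<Sum>k<p. M $$ (k,j) * y $ k)"
  by (auto simp: scalar_prod_def lessThan_atLeast0 intro!: sum.cong)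

lemma farkas_mat:
  assumes M: "M \<in> carrier_mat p q" and w: "w \<in> carrier_vec p"
  shows "(\<exists>z \<in> carrier_vec q. nonneg_vec z \<and> M *\<^sub>v z = w) \<or>
         (\<exists>y \<in> carrier_vec p. nonneg_vec (transpose_mat M *\<^sub>v y) \<and> y \<bullet> w < 0)"
proof -
  note h0 = farkas_fun[of q p, rule_format, where v="\<lambda>i k. M $$ (k,i)" and w="\<lambda>k. w $ k"]
  from h0 have
    "(\<exists>l. (\<forall>i<q. l i \<ge> 0) \<and> (\<forall>k<p. w $ k = (\<Sum>i<q. l i * M $$ (k,i)))) \<or>
     (\<exists>y. (\<forall>i<q. dp p y (\<lambda>k. M $$ (k,i)) \<ge> 0) \<and> dp p y (\<lambda>k. w $ k) < 0)"
    by simp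
  then show ?thesis
  proof
    assume "\<exists>l. (\<forall>i<q. l i \<ge> 0) \<and> (\<forall>k<p. w $ k = (\<Sum>i<q. l i * M $$ (k,i)))"
    then obtain l where l: "\<forall>i<q. l i \<ge> 0" "\<forall>k<p. w $ k = (\<Sum>i<q. l i * M $$ (k,i))" by blast
    let ?z = "vec q l"
    have "?z \<in> carrier_vec q" by simp
    moreover have "nonneg_vec ?z" using l(1) by (simp add: nonneg_vec_def)
    moreover have "M *\<^sub>v ?z = w"
    proof (rule eq_vecI)
      fix k assume "k < dim_vec w"
      then have k: "k < p" using w by simp
      show "(M *\<^sub>v ?z) $ k = w $ k"
        using mv_idx[OF M _ k, of ?z] l(2) k by (simp add: mult.commute)
    qed (use M w in simp)
    ultimately show ?thesis by blast
  next
    assume "\<exists>y. (\<forall>i<q. dp p y (\<lambda>k. M $$ (k,i)) \<ge> 0) \<and> dp p y (\<lambda>k. w $ k) < 0"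
    then obtain y where y: "\<forall>i<q. dp p y (\<lambda>k. M $$ (k,i)) \<ge> 0" "dp p y (\<lambda>k. w $ k) < 0" by blast
    let ?y = "vec p y"
    have "?y \<in> carrier_vec p" by simp
    moreover have "nonneg_vec (transpose_mat M *\<^sub>v ?y)"
      unfolding nonneg_vec_def
    proof (intro allI impI)
      fix i assume "i < dim_vec (transpose_mat M *\<^sub>v ?y)"
      then have i: "i < q" using M by simp
      have "(transpose_mat M *\<^sub>v ?y) $ i = dp p y (\<lambda>k. M $$ (k,i))"
        using mtv_idx[OF M _ i, of ?y] by (simp add: dp_def mult.commute)
      then show "(transpose_mat M *\<^sub>v ?y) $ i \<ge> 0" using y(1) i by simp
    qed
    moreover have "?y \<bullet> w < 0"
    proof -
      have "?y \<bullet> w = dp p y (\<lambda>k. w $ k)"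
        using w by (simp add: scalar_prod_def dp_def lessThan_atLeast0)
      with y(2) show ?thesis by simp
    qed
    ultimately show ?thesis by blast
  qed
qed


lemma slack_imp_RCGC:
  assumes "is_slack_matrix_of_polyhedral_cone S"
  shows "RCGC S"
proof -
  from assms obtain K where hK: "is_slack_matrix_of_cone S K"
    unfolding is_slack_matrix_of_polyhedral_cone_def by (elim exE) (rule that)
  obtain n A B where P: "A \<in> carrier_mat (dim_row S) n \<and> B \<in> carrier_mat n (dim_col S) \<and>
        K = {x \<in> carrier_vec n. nonneg_vec (transpose_mat B *\<^sub>v x)} \<and>
        K = {transpose_mat A *\<^sub>v y | y. y \<in> carrier_vec (dim_row S) \<and> nonneg_vec y} \<and>
        S = A * B"
    using hK unfolding is_slack_matrix_of_cone_def by (elim exE) (rule that)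
  note A = P[THEN conjunct1]
  note B = P[THEN conjunct2, THEN conjunct1]
  note K1 = P[THEN conjunct2, THEN conjunct2, THEN conjunct1]
  note K2 = P[THEN conjunct2, THEN conjunct2, THEN conjunct2, THEN conjunct1]
  note S = P[THEN conjunct2, THEN conjunct2, THEN conjunct2, THEN conjunct2]
  have tr: "transpose_mat S *\<^sub>v x = transpose_mat B *\<^sub>v (transpose_mat A *\<^sub>v x)"
    if "x \<in> carrier_vec (dim_row S)" for x
  proof -
    have "transpose_mat S = transpose_mat B * transpose_mat A"
      unfolding S by (rule transpose_mult[OF A B])
    moreover have "(transpose_mat B * transpose_mat A) *\<^sub>v x = transpose_mat B *\<^sub>v (transpose_mat A *\<^sub>v x)"
      by (rule assoc_mult_mat_vec) (use A B that in auto)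
    ultimately show ?thesis by simp
  qed
  show ?thesis unfolding RCGC_def
  proof (intro equalityI subsetI)
    fix v assume "v \<in> {transpose_mat S *\<^sub>v x | x. x \<in> carrier_vec (dim_row S) \<and> nonneg_vec x}"
    then obtain x where x: "x \<in> carrier_vec (dim_row S)" "nonneg_vec x" and v: "v = transpose_mat S *\<^sub>v x"
      by blast
    have "transpose_mat A *\<^sub>v x \<in> K" unfolding K2 using x by blast
    then have "nonneg_vec (transpose_mat B *\<^sub>v (transpose_mat A *\<^sub>v x))" unfolding K1 by simp
    then have "nonneg_vec v" using tr[OF x(1)] v by simp
    moreover have "v \<in> carrier_vec (dim_col S)" unfolding v by (intro carrier_vecI) simp
    moreover have "v \<in> {transpose_mat S *\<^sub>v x | x. x \<in> carrier_vec (dim_row S)}"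
      unfolding v using x(1) by blast
    ultimately show "v \<in> {transpose_mat S *\<^sub>v x | x. x \<in> carrier_vec (dim_row S)} \<inter>
      {v \<in> carrier_vec (dim_col S). nonneg_vec v}" by simp
  next
    fix v assume h: "v \<in> {transpose_mat S *\<^sub>v x | x. x \<in> carrier_vec (dim_row S)} \<inter>
      {v \<in> carrier_vec (dim_col S). nonneg_vec v}"
    from IntD1[OF h] obtain x where x: "x \<in> carrier_vec (dim_row S)" and v: "v = transpose_mat S *\<^sub>v x"
      by blast
    from IntD2[OF h] have nv: "nonneg_vec v" by simp
    have "transpose_mat A *\<^sub>v x \<in> carrier_vec n" using A x by (intro mult_mat_vec_carrier) auto
    moreover have "nonneg_vec (transpose_mat B *\<^sub>v (transpose_mat A *\<^sub>v x))"
      using nv unfolding v tr[OF x] .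
    ultimately have "transpose_mat A *\<^sub>v x \<in> K" unfolding K1 by simp
    then obtain y where y: "y \<in> carrier_vec (dim_row S)" "nonneg_vec y"
      and e: "transpose_mat A *\<^sub>v x = transpose_mat A *\<^sub>v y"
      unfolding K2 by blast
    have "v = transpose_mat S *\<^sub>v y" unfolding v tr[OF x] tr[OF y(1)] e ..
    then show "v \<in> {transpose_mat S *\<^sub>v x | x. x \<in> carrier_vec (dim_row S) \<and> nonneg_vec x}"
      using y by blast
  qed
qed

lemma RCGC_imp_slack:
  assumes M: "M \<in> carrier_mat p q" and R: "RCGC M"
  shows "is_slack_matrix_of_polyhedral_cone M"
proof -
  from rankfac[of p p q "\<lambda>i j. M $$ (i,j)"] obtain n :: nat and a b c where
    ab: "\<forall>i<p. \<forall>j<q. M $$ (i,j) = (\<Sum>l<n. a i l * b l j)" and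
    bc: "\<forall>l<n. \<forall>j<q. b l j = (\<Sum>i<p. c l i * M $$ (i,j))" and
    inj: "\<forall>x. (\<forall>j<q. (\<Sum>l<n. x l * b l j) = 0) \<longrightarrow> (\<forall>l<n. x l = 0)"
    by blast
  define A where "A = mat p n (\<lambda>(i,l). a i l)"
  define B where "B = mat n q (\<lambda>(l,j). b l j)"
  define C where "C = mat n p (\<lambda>(l,i). c l i)"
  have A: "A \<in> carrier_mat p n" and B: "B \<in> carrier_mat n q" and C: "C \<in> carrier_mat n p"
    unfolding A_def B_def C_def by auto
  have MAB: "M = A * B"
  proof (rule eq_matI)
    fix i j assume "i < dim_row (A * B)" "j < dim_col (A * B)"
    then have i: "i < p" and j: "j < q" using A B by auto
    have "(A * B) $$ (i,j) = (\<Sum>l<n. a i l * b l j)"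
      using i j A B unfolding A_def B_def
      by (auto simp: scalar_prod_def lessThan_atLeast0 intro!: sum.cong)
    then show "M $$ (i,j) = (A * B) $$ (i,j)" using ab i j by simp
  qed (use M A B in auto)
  have BCM: "B = C * M"
  proof (rule eq_matI)
    fix l j assume "l < dim_row (C * M)" "j < dim_col (C * M)"
    then have l: "l < n" and j: "j < q" using C M by auto
    have "(C * M) $$ (l,j) = (\<Sum>i<p. c l i * M $$ (i,j))"
      using l j C M unfolding C_def
      by (auto simp: scalar_prod_def lessThan_atLeast0 intro!: sum.cong)
    then show "B $$ (l,j) = (C * M) $$ (l,j)" using bc l j unfolding B_def by simp
  qed (use M B C in auto)
  have Bidx: "(transpose_mat B *\<^sub>v u) $ j = (\<Sum>l<n. u $ l * b l j)"
    if "u \<in> carrier_vec n" "j < q" for u j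
    using mtv_idx[OF B that] that unfolding B_def by (auto simp: mult.commute intro!: sum.cong)
  have Binj: "u = u'" if u: "u \<in> carrier_vec n" and u': "u' \<in> carrier_vec n"
    and e: "transpose_mat B *\<^sub>v u = transpose_mat B *\<^sub>v u'" for u u'
  proof -
    have "\<forall>j<q. (\<Sum>l<n. (u $ l - u' $ l) * b l j) = 0"
    proof (intro allI impI)
      fix j assume j: "j < q"
      have "(\<Sum>l<n. (u $ l - u' $ l) * b l j) = (\<Sum>l<n. u $ l * b l j) - (\<Sum>l<n. u' $ l * b l j)"
        by (simp add: sum_subtractf left_diff_distrib)
      also have "\<dots> = 0" using Bidx[OF u j] Bidx[OF u' j] e by simp
      finally show "(\<Sum>l<n. (u $ l - u' $ l) * b l j) = 0" .
    qed
    then have "\<forall>l<n. u $ l - u' $ l = 0"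
      using spec[OF inj, of "\<lambda>l. u $ l - u' $ l"] by (rule rev_mp)
    then show ?thesis using u u' by (intro eq_vecI) auto
  qed
  have MT: "transpose_mat M *\<^sub>v y = transpose_mat B *\<^sub>v (transpose_mat A *\<^sub>v y)"
    if "y \<in> carrier_vec p" for y
    using that A B unfolding MAB by (simp add: transpose_mult[OF A B])
  have BT: "transpose_mat B *\<^sub>v x = transpose_mat M *\<^sub>v (transpose_mat C *\<^sub>v x)"
    if "x \<in> carrier_vec n" for x
    using that C M unfolding BCM by (simp add: transpose_mult[OF C M])
  define K where "K = {x \<in> carrier_vec n. nonneg_vec (transpose_mat B *\<^sub>v x)}"
  have R': "{transpose_mat M *\<^sub>v x | x. x \<in> carrier_vec p \<and> nonneg_vec x} =
     {transpose_mat M *\<^sub>v x | x. x \<in> carrier_vec p} \<inter> {v \<in> carrier_vec q. nonneg_vec v}"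
    using R M unfolding RCGC_def by simp
  have K2: "K = {transpose_mat A *\<^sub>v y | y. y \<in> carrier_vec p \<and> nonneg_vec y}"
  proof (intro equalityI subsetI)
    fix x assume "x \<in> K"
    then have x: "x \<in> carrier_vec n" and nx: "nonneg_vec (transpose_mat B *\<^sub>v x)"
      unfolding K_def by auto
    have Cx: "transpose_mat C *\<^sub>v x \<in> carrier_vec p" using C x by (intro mult_mat_vec_carrier) auto
    have "transpose_mat B *\<^sub>v x \<in> carrier_vec q" using B x by (intro mult_mat_vec_carrier) auto
    then have "transpose_mat B *\<^sub>v x \<in> {transpose_mat M *\<^sub>v x | x. x \<in> carrier_vec p} \<inter> {v \<in> carrier_vec q. nonneg_vec v}"
      using BT[OF x] Cx nx by blast
    then have "transpose_mat B *\<^sub>v x \<in> {transpose_mat M *\<^sub>v x | x. x \<in> carrier_vec p \<and> nonneg_vec x}"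
      using R' by simp
    then obtain y where y: "y \<in> carrier_vec p" "nonneg_vec y" and e: "transpose_mat B *\<^sub>v x = transpose_mat M *\<^sub>v y"
      by blast
    have "x = transpose_mat A *\<^sub>v y"
      using Binj[OF x _ e[unfolded MT[OF y(1)]]] A y by simp
    then show "x \<in> {transpose_mat A *\<^sub>v y | y. y \<in> carrier_vec p \<and> nonneg_vec y}" using y by blast
  next
    fix x assume "x \<in> {transpose_mat A *\<^sub>v y | y. y \<in> carrier_vec p \<and> nonneg_vec y}"
    then obtain y where y: "y \<in> carrier_vec p" "nonneg_vec y" and x: "x = transpose_mat A *\<^sub>v y" by blast
    have "transpose_mat M *\<^sub>v y \<in> {transpose_mat M *\<^sub>v x | x. x \<in> carrier_vec p \<and> nonneg_vec x}"
      using y by blast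
    then have "nonneg_vec (transpose_mat M *\<^sub>v y)" using R' by blast
    then have "nonneg_vec (transpose_mat B *\<^sub>v x)" using MT[OF y(1)] x by simp
    moreover have "x \<in> carrier_vec n" unfolding x using A y(1) by (intro mult_mat_vec_carrier) auto
    ultimately show "x \<in> K" unfolding K_def by blast
  qed
  have dims: "dim_row M = p" "dim_col M = q" using M by auto
  have "is_slack_matrix_of_cone M K"
    unfolding is_slack_matrix_of_cone_def dims
    apply (rule exI[where x=n], rule exI[where x=A], rule exI[where x=B])
    by (intro conjI) (fact A, fact B, fact K_def, fact K2, fact MAB)
  then show ?thesis unfolding is_slack_matrix_of_polyhedral_cone_def by (rule exI)
qed

lemma RCGC_imp_CCGC:
  assumes M: "M \<in> carrier_mat p q" and nn: "nonneg_mat M" and R: "RCGC M"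
  shows "CCGC M"
proof -
  have R': "{transpose_mat M *\<^sub>v x | x. x \<in> carrier_vec p \<and> nonneg_vec x} =
     {transpose_mat M *\<^sub>v x | x. x \<in> carrier_vec p} \<inter> {v \<in> carrier_vec q. nonneg_vec v}"
    using R M unfolding RCGC_def by simp
  have "{M *\<^sub>v z | z. z \<in> carrier_vec q \<and> nonneg_vec z} =
     {M *\<^sub>v z | z. z \<in> carrier_vec q} \<inter> {v \<in> carrier_vec p. nonneg_vec v}"
  proof (intro equalityI subsetI)
    fix v assume "v \<in> {M *\<^sub>v z | z. z \<in> carrier_vec q \<and> nonneg_vec z}"
    then obtain z where z: "z \<in> carrier_vec q" "nonneg_vec z" and v: "v = M *\<^sub>v z" by blast
    have "nonneg_vec v" unfolding nonneg_vec_def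
    proof (intro allI impI)
      fix k assume "k < dim_vec v"
      then have k: "k < p" using v M by simp
      have "(\<Sum>j<q. M $$ (k,j) * z $ j) \<ge> 0"
        using nn z M k unfolding nonneg_mat_def nonneg_vec_def by (intro sum_nonneg) auto
      then show "v $ k \<ge> 0" using mv_idx[OF M z(1) k] v by simp
    qed
    moreover have "v \<in> carrier_vec p" unfolding v using M z(1) by (intro mult_mat_vec_carrier) auto
    ultimately show "v \<in> {M *\<^sub>v z | z. z \<in> carrier_vec q} \<inter> {v \<in> carrier_vec p. nonneg_vec v}"
      using v z by blast
  next
    fix v assume "v \<in> {M *\<^sub>v z | z. z \<in> carrier_vec q} \<inter> {v \<in> carrier_vec p. nonneg_vec v}"
    then obtain z where z: "z \<in> carrier_vec q" and v: "v = M *\<^sub>v z" and vc: "v \<in> carrier_vec p"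
      and nv: "nonneg_vec v" by blast
    from farkas_mat[OF M vc] show "v \<in> {M *\<^sub>v z | z. z \<in> carrier_vec q \<and> nonneg_vec z}"
    proof
      assume "\<exists>z\<in>carrier_vec q. nonneg_vec z \<and> M *\<^sub>v z = v"
      then show ?thesis by blast
    next
      assume "\<exists>y\<in>carrier_vec p. nonneg_vec (transpose_mat M *\<^sub>v y) \<and> y \<bullet> v < 0"
      then obtain y where y: "y \<in> carrier_vec p" "nonneg_vec (transpose_mat M *\<^sub>v y)" "y \<bullet> v < 0"
        by blast
      have "transpose_mat M *\<^sub>v y \<in> {transpose_mat M *\<^sub>v x | x. x \<in> carrier_vec p} \<inter> {v \<in> carrier_vec q. nonneg_vec v}"
        using y M by auto
      then have "transpose_mat M *\<^sub>v y \<in> {transpose_mat M *\<^sub>v x | x. x \<in> carrier_vec p \<and> nonneg_vec x}"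
        using R' by simp
      then obtain x where x: "x \<in> carrier_vec p" "nonneg_vec x" and e: "transpose_mat M *\<^sub>v y = transpose_mat M *\<^sub>v x"
        by blast
      have "y \<bullet> v = (transpose_mat M *\<^sub>v y) \<bullet> z"
        using transpose_vec_mult_scalar[OF M z y(1)] v by simp
      also have "\<dots> = (transpose_mat M *\<^sub>v x) \<bullet> z" using e by simp
      also have "\<dots> = x \<bullet> v"
        using transpose_vec_mult_scalar[OF M z x(1)] v by simp
      also have "\<dots> \<ge> 0"
        using x nv vc unfolding scalar_prod_def nonneg_vec_def by (intro sum_nonneg) auto
      finally show ?thesis using y(3) by simp
    qed
  qed
  then show ?thesis unfolding CCGC_def using M by simp
qed

lemma RCGC_transpose: "RCGC (transpose_mat M) = CCGC M"
  unfolding RCGC_def CCGC_def by simp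

lemma CCGC_transpose: "CCGC (transpose_mat M) = RCGC M"
  unfolding RCGC_def CCGC_def by simp

lemma nonneg_transpose: "nonneg_mat M \<Longrightarrow> nonneg_mat (transpose_mat M)"
  unfolding nonneg_mat_def by simp

theorem corollary2p4:
  fixes M :: "real mat" and p q :: nat
  assumes "M \<in> carrier_mat p q" and "nonneg_mat M"
  shows "(is_slack_matrix_of_polyhedral_cone M \<longleftrightarrow> RCGC M) \<and>
         (RCGC M \<longleftrightarrow> CCGC M) \<and>
         (is_slack_matrix_of_polyhedral_cone M \<longleftrightarrow> CCGC M)"
proof -
  have 1: "is_slack_matrix_of_polyhedral_cone M \<longleftrightarrow> RCGC M"
    using slack_imp_RCGC RCGC_imp_slack[OF assms(1)] by blast
  have 2: "RCGC M \<Longrightarrow> CCGC M" using RCGC_imp_CCGC[OF assms] .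
  have "CCGC M \<Longrightarrow> RCGC M"
    using RCGC_imp_CCGC[of "transpose_mat M" q p] assms nonneg_transpose
    by (simp add: RCGC_transpose CCGC_transpose)
  with 1 2 show ?thesis by blast
qed
end
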